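(* Consider a 3-petal flower whose center coin has radius $1$ and whose outer coins have radii $r_1,r_2,r_3$, with internal angles $\theta_1,\theta_2,\theta_3$. Then $r_1,r_2,r_3$ are all rational if and only if $\cos\theta_i$ and $\sin\theta_i$ are rational for each $i=1,2,3$.
   Context: A 3-petal flower is a configuration of four closed disks (coins) in the Euclidean plane with pairwise disjoint interiors, a center coin and three outer coins, such that every two of the four coins are externally tangent. With center coin of radius $r$ and outer radii $r_1,r_2,r_3$, the internal angle $\theta_i$ ($i=1,2,3$, indices mod 3) is the angle at the center of the center coin between the centers of outer coins $i$ and $i+1$, so $\cos\theta_i=\frac{(r+r_i)^2+(r+r_{i+1})^2-(r_i+r_{i+1})^2}{2(r+r_i)(r+r_{i+1})}$ and $\theta_1+\theta_2+\theta_3=2\pi$. *)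

theory Defs
  imports Complex_Main
begin

text \<open>Internal angle of a 3-petal flower with center radius r, at the center of
the center coin, between the centers of the outer coins of radii a and b
(law of cosines in the triangle of centers, side lengths r+a, r+b, a+b).\<close>

definition petal_cos :: "real \<Rightarrow> real \<Rightarrow> real \<Rightarrow> real" where
  "petal_cos r a b =
     ((r + a)^2 + (r + b)^2 - (a + b)^2) / (2 * (r + a) * (r + b))"

definition petal_angle :: "real \<Rightarrow> real \<Rightarrow> real \<Rightarrow> real" where
  "petal_angle r a b = arccos (petal_cos r a b)"

definition three_petal_flower :: "real \<Rightarrow> real \<Rightarrow> real \<Rightarrow> real \<Rightarrow> bool" where
  "three_petal_flower r r1 r2 r3 \<longleftrightarrow>
     r > 0 \<and> r1 > 0 \<and> r2 > 0 \<and> r3 > 0 \<and>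
     petal_angle r r1 r2 + petal_angle r r2 r3 + petal_angle r r3 r1 = 2 * pi"

end

theory Submission imports Defs begin

lemma pc:
  fixes a b :: real
  assumes a: "a > 0" and b: "b > 0"
  shows "petal_cos 1 a b = 1 - 2 * (a/(1+a)) * (b/(1+b))"
proof -
  have d: "(1+a)*(1+b) > 0" using a b by simp
  have n: "(1 + a)^2 + (1 + b)^2 - (a + b)^2 = 2 * ((1+a)*(1+b)) - 4*(a*b)" by (simp add: algebra_simps power2_eq_square)
  have "petal_cos 1 a b = (2 * ((1+a)*(1+b)) - 4*(a*b)) / (2 * ((1 + a) * (1 + b)))" unfolding petal_cos_def n by (simp add: mult.assoc)
  also have "\<dots> = 2 * ((1+a)*(1+b)) / (2 * ((1 + a) * (1 + b))) - 4*(a*b) / (2 * ((1 + a) * (1 + b)))" by (rule diff_divide_distrib)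
  also have "2 * ((1+a)*(1+b)) / (2 * ((1 + a) * (1 + b))) = 1" using a b d by simp
  also have "4*(a*b) / (2 * ((1 + a) * (1 + b))) = 2 * (a/(1+a)) * (b/(1+b))" by simp
  finally show ?thesis .
qed

lemma pair:
  fixes a b :: real
  assumes a: "a > 0" and b: "b > 0"
  defines "c \<equiv> petal_cos 1 a b"
  shows "1 - c = 2 * (a/(1+a)) * (b/(1+b))" "-1 < c" "c < 1"
proof -
  have e: "c = 1 - 2 * (a/(1+a)) * (b/(1+b))" unfolding c_def by (rule pc[OF a b])
  show "1 - c = 2 * (a/(1+a)) * (b/(1+b))" using e by simp
  have x: "0 < a/(1+a)" "a/(1+a) < 1" "0 < b/(1+b)" "b/(1+b) < 1" using a b by auto
  have "0 < (a/(1+a)) * (b/(1+b))" using x(1,3) by (rule mult_pos_pos)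
  moreover have "(a/(1+a)) * (b/(1+b)) < 1 * 1"
    by (rule mult_strict_mono) (use x in auto)
  ultimately show "-1 < c" "c < 1" using e by auto
qed
lemma angle:
  fixes c :: real
  assumes "-1 < c" "c < 1"
  defines "\<theta> \<equiv> arccos c"
  shows "cos \<theta> = c" "sin \<theta> = sqrt (1 - c^2)" "sin \<theta> > 0" "0 < \<theta>" "\<theta> < pi"
    "cos (\<theta>/2) / sin (\<theta>/2) = (1 + c) / sin \<theta>"
    "1 + ((1+c)/sin \<theta>)^2 = 2 / (1 - c)"
proof -
  show c: "cos \<theta> = c" unfolding \<theta>_def using assms by simp
  show s: "sin \<theta> = sqrt (1 - c^2)" unfolding \<theta>_def using assms by (simp add: sin_arccos)
  have "c^2 < 1" using assms by (simp add: abs_less_iff abs_square_less_1)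
  then show sp: "sin \<theta> > 0" using s by simp
  show "0 < \<theta>" "\<theta> < pi" unfolding \<theta>_def using assms by (auto simp: arccos_lt_bounded)
  have sd: "sin \<theta> = 2 * sin (\<theta>/2) * cos (\<theta>/2)" using sin_double[of "\<theta>/2"] by simp
  have cd: "cos \<theta> = 2 * (cos (\<theta>/2))^2 - 1" using cos_double_cos[of "\<theta>/2"] by simp
  have "sin (\<theta>/2) \<noteq> 0" using sd sp by auto
  then show "cos (\<theta>/2) / sin (\<theta>/2) = (1 + c) / sin \<theta>"
    using sd cd c sp by (simp add: field_simps power2_eq_square)
  have S: "(sin \<theta>)^2 = 1 - c^2" using s \<open>c^2 < 1\<close> by simp
  have "1 + ((1+c)/sin \<theta>)^2 = ((sin \<theta>)^2 + (1+c)^2) / (sin \<theta>)^2" using sp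
    by (simp add: field_simps)
  also have "\<dots> = (2*(1+c)) / ((1-c)*(1+c))" unfolding S by (simp add: algebra_simps power2_eq_square)
  also have "\<dots> = 2 / (1-c)"
  proof -
    have "1 - c \<noteq> 0" "1 + c \<noteq> 0" using assms by auto
    then show ?thesis by (simp add: frac_eq_eq)
  qed
  finally show "1 + ((1+c)/sin \<theta>)^2 = 2 / (1 - c)" .
qed

lemma closure:
  fixes a1 a2 a3 :: real
  assumes "a1 + a2 + a3 = pi" "sin a1 \<noteq> 0" "sin a2 \<noteq> 0" "sin a3 \<noteq> 0"
  shows "(cos a1/sin a1)*(cos a2/sin a2) + (cos a2/sin a2)*(cos a3/sin a3) + (cos a3/sin a3)*(cos a1/sin a1) = 1"
proof -
  have a3: "a3 = pi - (a1+a2)" using assms by simp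
  have s3: "sin a3 = sin a1 * cos a2 + cos a1 * sin a2" unfolding a3 by (simp add: sin_add)
  have c3: "cos a3 = - (cos a1 * cos a2 - sin a1 * sin a2)" unfolding a3 by (simp add: cos_add)
  have "cos a1 * cos a2 * sin a3 + cos a2 * cos a3 * sin a1 + cos a3 * cos a1 * sin a2 = sin a1 * sin a2 * sin a3"
    unfolding c3 s3 by (simp add: algebra_simps power2_eq_square)
  then show ?thesis using assms(2-4) by (simp add: field_simps)
qed

lemma pairfacts:
  fixes a b :: real
  assumes a: "a > 0" and b: "b > 0"
  defines "c \<equiv> petal_cos 1 a b" and "\<theta> \<equiv> petal_angle 1 a b"
  defines "t \<equiv> (1 + c) / sin \<theta>"
  shows "cos \<theta> = c" "c = 1 - 2 * (a/(1+a)) * (b/(1+b))" "(1 + t^2) * ((a/(1+a)) * (b/(1+b))) = 1"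
    "sin \<theta> = 2 * t / (1 + t^2)" "t > 0" "sin (\<theta>/2) \<noteq> 0" "cos (\<theta>/2) / sin (\<theta>/2) = t"
proof -
  note p = pair[OF a b, folded c_def]
  have th: "\<theta> = arccos c" unfolding \<theta>_def c_def petal_angle_def ..
  note an = angle[OF p(2) p(3), folded th]
  show "cos \<theta> = c" by (rule an(1))
  show "c = 1 - 2 * (a/(1+a)) * (b/(1+b))" using p(1) by linarith
  show "cos (\<theta>/2) / sin (\<theta>/2) = t" unfolding t_def by (rule an(6))
  have c1: "1 + c > 0" using p(2) by linarith
  show "t > 0" unfolding t_def using c1 an(3) by (rule divide_pos_pos)
  have "0 < \<theta>/2" "\<theta>/2 < pi" using an(4,5) by auto
  then have "sin (\<theta>/2) > 0" by (rule sin_gt_zero)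
  then show "sin (\<theta>/2) \<noteq> 0" by simp
  have e: "1 + t^2 = 2/(1-c)" unfolding t_def by (rule an(7))
  define P where "P = (a/(1+a)) * (b/(1+b))"
  have PP: "1 - c = 2 * P" unfolding P_def using p(1) by (simp add: mult.assoc)
  have Pp: "P > 0" unfolding P_def using a b by simp
  have "(2/(1-c)) * P = 1" unfolding PP using Pp by simp
  then show "(1 + t^2) * ((a/(1+a)) * (b/(1+b))) = 1" unfolding e P_def .
  have "c^2 \<le> 1" using p(2,3) by (simp add: abs_square_le_1 abs_le_iff)
  then have S: "(sin \<theta>)^2 = 1 - c^2" using an(2) by simp
  have sn: "sin \<theta> \<noteq> 0" using an(3) by simp
  have c2: "1 - c \<noteq> 0" using p(3) by simp
  have "2 * t / (1 + t^2) = t * (1-c)" unfolding e using c2 by simp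
  also have "\<dots> = ((1+c)*(1-c)) / sin \<theta>" unfolding t_def by simp
  also have "(1+c)*(1-c) = (sin \<theta>)^2" unfolding S by (simp add: algebra_simps power2_eq_square)
  also have "(sin \<theta>)^2 / sin \<theta> = sin \<theta>" using sn by (simp add: power2_eq_square)
  finally show "sin \<theta> = 2 * t / (1 + t^2)" ..
qed

lemma sq1: "(u::real)^2 = 1 \<Longrightarrow> u > 0 \<Longrightarrow> u = 1"
proof -
  assume "u^2 = 1" "u > 0"
  then have "u = 1 \<or> u = -1" using power2_eq_1_iff[of u] by blast
  then show "u = 1" using \<open>u > 0\<close> by linarith
qed

lemma algx:
  fixes x y z t1 t2 t3 :: real
  assumes pos: "x > 0" "y > 0" "z > 0" "t1 > 0" "t2 > 0" "t3 > 0"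
   and e1: "(1+t1^2)*(x*y) = 1" and e2: "(1+t2^2)*(y*z) = 1" and e3: "(1+t3^2)*(z*x) = 1"
   and cl: "t1*t2 + t2*t3 + t3*t1 = 1"
  shows "x * (t1 + t3) = 1"
proof -
  have f1: "1 + t1^2 = (t1+t2)*(t1+t3)" using cl by (simp add: algebra_simps power2_eq_square)
  have f2: "1 + t2^2 = (t1+t2)*(t2+t3)" using cl by (simp add: algebra_simps power2_eq_square)
  have f3: "1 + t3^2 = (t1+t3)*(t2+t3)" using cl by (simp add: algebra_simps power2_eq_square)
  have "(x*(t1+t3))^2 * ((1+t2^2)*(y*z)) = ((1+t1^2)*(x*y)) * ((1+t3^2)*(z*x))"
    unfolding f1 f2 f3 unfolding power2_eq_square by algebra
  then have "(x*(t1+t3))^2 = 1" by (simp only: e1 e2 e3 mult_1_right)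
  moreover have "x*(t1+t3) > 0" using pos by simp
  ultimately show ?thesis using sq1 by blast
qed

lemma inv1: "(u::real) * v = 1 \<Longrightarrow> u = 1 / v"
  by (cases "v = 0") (auto simp: eq_divide_eq)

lemma inv2: "(u::real) * v = 1 \<Longrightarrow> v = 1 / u"
  by (rule inv1) (simp add: mult.commute)

theorem mainTheorem15:
  fixes r1 r2 r3 :: real
  assumes "three_petal_flower 1 r1 r2 r3"
  defines "\<theta>1 \<equiv> petal_angle 1 r1 r2"
      and "\<theta>2 \<equiv> petal_angle 1 r2 r3"
      and "\<theta>3 \<equiv> petal_angle 1 r3 r1"
  shows "(r1 \<in> \<rat> \<and> r2 \<in> \<rat> \<and> r3 \<in> \<rat>) \<longleftrightarrow>
         (cos \<theta>1 \<in> \<rat> \<and> sin \<theta>1 \<in> \<rat> \<and> cos \<theta>2 \<in> \<rat> \<and> sin \<theta>2 \<in> \<rat> \<and>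
          cos \<theta>3 \<in> \<rat> \<and> sin \<theta>3 \<in> \<rat>)"
proof -
  have pos: "r1 > 0" "r2 > 0" "r3 > 0" and sum: "\<theta>1 + \<theta>2 + \<theta>3 = 2 * pi"
    using assms(1) unfolding three_petal_flower_def \<theta>1_def \<theta>2_def \<theta>3_def by auto
  define t1 where "t1 = (1 + petal_cos 1 r1 r2) / sin \<theta>1"
  define t2 where "t2 = (1 + petal_cos 1 r2 r3) / sin \<theta>2"
  define t3 where "t3 = (1 + petal_cos 1 r3 r1) / sin \<theta>3"
  define x where "x = r1/(1+r1)"
  define y where "y = r2/(1+r2)"
  define z where "z = r3/(1+r3)"
  note P1 = pairfacts[OF pos(1) pos(2), folded \<theta>1_def, folded t1_def x_def y_def]
  note P2 = pairfacts[OF pos(2) pos(3), folded \<theta>2_def, folded t2_def y_def z_def]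
  note P3 = pairfacts[OF pos(3) pos(1), folded \<theta>3_def, folded t3_def z_def x_def]
  have cl: "t1*t2 + t2*t3 + t3*t1 = 1"
    using closure[of "\<theta>1/2" "\<theta>2/2" "\<theta>3/2"] sum P1(6,7) P2(6,7) P3(6,7) by simp
  have xp: "x > 0" "y > 0" "z > 0" unfolding x_def y_def z_def using pos by auto
  have X: "x * (t1 + t3) = 1"
    by (rule algx[OF xp P1(5) P2(5) P3(5) P1(3) P2(3) P3(3) cl])
  have Y: "y * (t2 + t1) = 1"
    by (rule algx[OF xp(2,3,1) P2(5) P3(5) P1(5) P2(3) P3(3) P1(3)]) (use cl in \<open>simp add: algebra_simps\<close>)
  have Z: "z * (t3 + t2) = 1"
    by (rule algx[OF xp(3,1,2) P3(5) P1(5) P2(5) P3(3) P1(3) P2(3)]) (use cl in \<open>simp add: algebra_simps\<close>)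
  have r1x: "r1 = x/(1-x)" unfolding x_def using pos by (simp add: field_simps)
  have r2y: "r2 = y/(1-y)" unfolding y_def using pos by (simp add: field_simps)
  have r3z: "r3 = z/(1-z)" unfolding z_def using pos by (simp add: field_simps)
  show ?thesis
  proof
    assume R: "r1 \<in> \<rat> \<and> r2 \<in> \<rat> \<and> r3 \<in> \<rat>"
    then have xq: "x \<in> \<rat>" "y \<in> \<rat>" "z \<in> \<rat>" unfolding x_def y_def z_def by auto
    have a: "t1 + t3 = 1/x" "t2 + t1 = 1/y" "t3 + t2 = 1/z" using inv2[OF X] inv2[OF Y] inv2[OF Z] by simp_all
    have h: "t1 = (1/x + 1/y - 1/z)/2" "t2 = (1/y + 1/z - 1/x)/2" "t3 = (1/z + 1/x - 1/y)/2"
      using a by (simp_all add: field_simps)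
    have tq: "t1 \<in> \<rat>" "t2 \<in> \<rat>" "t3 \<in> \<rat>"
      by (subst h(1), simp add: xq, subst h(2), simp add: xq, subst h(3), simp add: xq)
    show "cos \<theta>1 \<in> \<rat> \<and> sin \<theta>1 \<in> \<rat> \<and> cos \<theta>2 \<in> \<rat> \<and> sin \<theta>2 \<in> \<rat> \<and>
          cos \<theta>3 \<in> \<rat> \<and> sin \<theta>3 \<in> \<rat>"
      using P1(1,2,4) P2(1,2,4) P3(1,2,4) xq tq by simp
  next
    assume C: "cos \<theta>1 \<in> \<rat> \<and> sin \<theta>1 \<in> \<rat> \<and> cos \<theta>2 \<in> \<rat> \<and> sin \<theta>2 \<in> \<rat> \<and>
          cos \<theta>3 \<in> \<rat> \<and> sin \<theta>3 \<in> \<rat>"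
    have tq: "t1 \<in> \<rat>" "t2 \<in> \<rat>" "t3 \<in> \<rat>"
      unfolding t1_def t2_def t3_def using C P1(1) P2(1) P3(1) by (metis Rats_1 Rats_add Rats_divide)+
    have "x = 1/(t1+t3)" "y = 1/(t2+t1)" "z = 1/(t3+t2)" using inv1[OF X] inv1[OF Y] inv1[OF Z] by (simp_all add: add.commute)
    then have xq: "x \<in> \<rat>" "y \<in> \<rat>" "z \<in> \<rat>" using tq by simp_all
    show "r1 \<in> \<rat> \<and> r2 \<in> \<rat> \<and> r3 \<in> \<rat>" using r1x r2y r3z xq by simp
  qed
qed

end
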